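(* Let $n=m_1m_2$ with $m_1,m_2\geq 2$. Let $A\subseteq\mathbb{Z}_n$, $A_1\subseteq\mathbb{Z}_{m_1}$, $A_2\subseteq\mathbb{Z}_{m_2}$ be nonempty subsets none of which contains $0$. Suppose that for $i=1,2$ we have $f_i(A)\subseteq A_i$, where $f_i:\mathbb{Z}_n\to\mathbb{Z}_{m_i}$ is the natural map. Then $D_A(n)\geq D_{A_1}(m_1)+D_{A_2}(m_2)-1$.
   Context: $\mathbb{Z}_m$ is the integers mod $m$. For nonempty $A\subseteq\mathbb{Z}_m\setminus\{0\}$, a sequence $(x_1,\ldots,x_k)$ in $\mathbb{Z}_m$ is an $A$-weighted zero-sum sequence if there exist $a_1,\ldots,a_k\in A$ with $\sum a_ix_i=0$; $D_A(m)$ is the least positive integer $k$ such that every sequence of length $k$ in $\mathbb{Z}_m$ has a nonempty subsequence which is an $A$-weighted zero-sum sequence. The natural map $\mathbb{Z}_n\to\mathbb{Z}_m$ for $m\mid n$ is $a+n\mathbb{Z}\mapsto a+m\mathbb{Z}$. *)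

theory Defs
  imports Main
begin

text \<open>Z_m is modelled as the residues {0..<m} :: nat set, with arithmetic mod m.
 A sequence of length k in Z_m is a list xs of residues (all < m).\<close>

definition weighted_zero_sum :: "nat \<Rightarrow> nat set \<Rightarrow> nat list \<Rightarrow> nat set \<Rightarrow> bool" where
  "weighted_zero_sum m A xs I \<longleftrightarrow>
     (\<exists>a. (\<forall>i\<in>I. a i \<in> A) \<and> (\<Sum>i\<in>I. a i * xs ! i) mod m = 0)"

definition has_weighted_zs_subseq :: "nat \<Rightarrow> nat set \<Rightarrow> nat list \<Rightarrow> bool" where
  "has_weighted_zs_subseq m A xs \<longleftrightarrow>
     (\<exists>I. I \<subseteq> {..<length xs} \<and> I \<noteq> {} \<and> weighted_zero_sum m A xs I)"

definition davenport_A :: "nat \<Rightarrow> nat set \<Rightarrow> nat" where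
  "davenport_A m A = (LEAST k. 0 < k \<and>
     (\<forall>xs. length xs = k \<longrightarrow> set xs \<subseteq> {..<m} \<longrightarrow> has_weighted_zs_subseq m A xs))"

end

theory Submission
  imports Defs
begin

lemma no_zs_nil: "\<not> has_weighted_zs_subseq m B []"
  by (simp add: has_weighted_zs_subseq_def)

lemma good_seq:
  "\<exists>xs. length xs = davenport_A m B - 1 \<and> set xs \<subseteq> {..<m} \<and> \<not> has_weighted_zs_subseq m B xs"
proof (cases "davenport_A m B - 1 = 0")
  case True
  then show ?thesis using no_zs_nil by (intro exI[of _ "[]"]) simp
next
  case False
  define P where "P = (\<lambda>k. 0 < k \<and>
     (\<forall>xs. length xs = k \<longrightarrow> set xs \<subseteq> {..<m} \<longrightarrow> has_weighted_zs_subseq m B xs))"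
  have D: "davenport_A m B = (LEAST k. P k)" unfolding davenport_A_def P_def by simp
  have "\<not> P (davenport_A m B - 1)"
    unfolding D by (rule not_less_Least) (use False D in auto)
  then show ?thesis using False unfolding P_def by auto
qed

lemma take_no_zs:
  assumes "\<not> has_weighted_zs_subseq m B xs" "k \<le> length xs"
  shows "\<not> has_weighted_zs_subseq m B (take k xs)"
proof
  assume "has_weighted_zs_subseq m B (take k xs)"
  moreover have "length (take k xs) = k" using assms(2) by simp
  ultimately obtain I a where I: "I \<subseteq> {..<k}" "I \<noteq> {}" "\<forall>i\<in>I. a i \<in> B"
    "(\<Sum>i\<in>I. a i * take k xs ! i) mod m = 0"
    unfolding has_weighted_zs_subseq_def weighted_zero_sum_def by metis
  have "(\<Sum>i\<in>I. a i * take k xs ! i) = (\<Sum>i\<in>I. a i * xs ! i)"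
    using I(1) by (intro sum.cong) auto
  then have "has_weighted_zs_subseq m B xs"
    using I assms(2) unfolding has_weighted_zs_subseq_def weighted_zero_sum_def
    by (intro exI[of _ I]) auto
  then show False using assms(1) by simp
qed

lemma exists_zs:
  assumes "m \<ge> 1" "B \<noteq> {}" "length xs = m"
  shows "has_weighted_zs_subseq m B xs"
proof -
  obtain b where b: "b \<in> B" using assms(2) by auto
  define f where "f = (\<lambda>j. (\<Sum>i<j. xs ! i) mod m)"
  have "f ` {0..m} \<subseteq> {..<m}" using assms(1) unfolding f_def by auto
  then have "card (f ` {0..m}) \<le> m"
    by (metis card_lessThan card_mono finite_lessThan)
  then have "\<not> inj_on f {0..m}"
    using card_image by fastforce
  then obtain j1 j2 where j: "j1 \<in> {0..m}" "j2 \<in> {0..m}" "j1 < j2" "f j1 = f j2"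
    unfolding inj_on_def by (metis linorder_neqE_nat)
  have split: "(\<Sum>i<j2. xs ! i) = (\<Sum>i<j1. xs ! i) + (\<Sum>i\<in>{j1..<j2}. xs ! i)"
    using j(3) by (metis le_less sum.atLeastLessThan_concat lessThan_atLeast0 zero_le)
  have "(\<Sum>i\<in>{j1..<j2}. xs ! i) mod m = 0"
  proof -
    have "((\<Sum>i<j1. xs ! i) + (\<Sum>i\<in>{j1..<j2}. xs ! i)) mod m = (\<Sum>i<j1. xs ! i) mod m"
      using j(4) split unfolding f_def by simp
    then have "m dvd ((\<Sum>i<j1. xs ! i) + (\<Sum>i\<in>{j1..<j2}. xs ! i)) - (\<Sum>i<j1. xs ! i)"
      using mod_eq_dvd_iff_nat[of "\<Sum>i<j1. xs ! i" "(\<Sum>i<j1. xs ! i) + (\<Sum>i\<in>{j1..<j2}. xs ! i)" m]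
      by simp
    then show ?thesis by simp
  qed
  then have "(\<Sum>i\<in>{j1..<j2}. b * xs ! i) mod m = 0"
    by (simp add: sum_distrib_left[symmetric] mod_mult_right_eq[symmetric])
  then show ?thesis
    unfolding has_weighted_zs_subseq_def weighted_zero_sum_def
    using j b assms(3) by (intro exI[of _ "{j1..<j2}"] conjI exI[of _ "\<lambda>_. b"]) auto
qed

lemma lower_bound:
  assumes "m \<ge> 1" "B \<noteq> {}"
    and "\<not> has_weighted_zs_subseq m B T" "set T \<subseteq> {..<m}"
  shows "length T < davenport_A m B"
proof (rule ccontr)
  define P where "P = (\<lambda>k. 0 < k \<and>
     (\<forall>xs. length xs = k \<longrightarrow> set xs \<subseteq> {..<m} \<longrightarrow> has_weighted_zs_subseq m B xs))"
  have D: "davenport_A m B = (LEAST k. P k)" unfolding davenport_A_def P_def by simp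
  have "P m" unfolding P_def using exists_zs[OF assms(1,2)] assms(1) by auto
  then have PD: "P (davenport_A m B)" unfolding D by (rule LeastI)
  assume "\<not> length T < davenport_A m B"
  then have le: "davenport_A m B \<le> length T" by simp
  have "set (take (davenport_A m B) T) \<subseteq> {..<m}"
    using assms(4) by (meson order_trans set_take_subset)
  then have "has_weighted_zs_subseq m B (take (davenport_A m B) T)"
    using PD le unfolding P_def by auto
  then show False using take_no_zs[OF assms(3) le] by simp
qed

theorem lemma1p7:
  fixes n m1 m2 :: nat and A A1 A2 :: "nat set"
  assumes "n = m1 * m2" and "m1 \<ge> 2" and "m2 \<ge> 2"
    and "A \<subseteq> {1..<n}" and "A \<noteq> {}"
    and "A1 \<subseteq> {1..<m1}" and "A1 \<noteq> {}"
    and "A2 \<subseteq> {1..<m2}" and "A2 \<noteq> {}"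
    and "(\<lambda>a. a mod m1) ` A \<subseteq> A1"
    and "(\<lambda>a. a mod m2) ` A \<subseteq> A2"
  shows "davenport_A n A \<ge> davenport_A m1 A1 + davenport_A m2 A2 - 1"
proof -
  obtain S1 where S1: "length S1 = davenport_A m1 A1 - 1" "set S1 \<subseteq> {..<m1}"
    "\<not> has_weighted_zs_subseq m1 A1 S1" using good_seq by blast
  obtain S2 where S2: "length S2 = davenport_A m2 A2 - 1" "set S2 \<subseteq> {..<m2}"
    "\<not> has_weighted_zs_subseq m2 A2 S2" using good_seq by blast
  define l1 where "l1 = length S1"
  define l2 where "l2 = length S2"
  define T where "T = map (\<lambda>x. m2 * x) S1 @ S2"
  have lenT: "length T = l1 + l2" unfolding T_def l1_def l2_def by simp
  have Tnth: "T ! i = (if i < l1 then m2 * S1 ! i else S2 ! (i - l1))" if "i < l1 + l2" for i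
    using that unfolding T_def l1_def l2_def by (simp add: nth_append)
  have setT: "set T \<subseteq> {..<n}"
  proof
    fix y assume "y \<in> set T"
    then consider x where "x \<in> set S1" "y = m2 * x" | "y \<in> set S2" unfolding T_def by auto
    then show "y \<in> {..<n}"
    proof cases
      case 1
      then have "x < m1" using S1(2) by auto
      then have "x + 1 \<le> m1" by simp
      then have "m2 * x + m2 \<le> m2 * m1" using mult_le_mono2[of "x+1" m1 m2] by (simp add: algebra_simps)
      then have "m2 * x < m2 * m1" using assms(3) by linarith
      then show ?thesis using 1 assms(1) by (simp add: mult.commute)
    next
      case 2
      then have "y < m2" using S2(2) by auto
      moreover have "m2 \<le> n" using assms(1,2) by simp
      ultimately show ?thesis by simp
    qed
  qed
  have noT: "\<not> has_weighted_zs_subseq n A T"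
  proof
    assume "has_weighted_zs_subseq n A T"
    then obtain I a where I: "I \<subseteq> {..<l1 + l2}" "I \<noteq> {}" "\<forall>i\<in>I. a i \<in> A"
      and s0: "(\<Sum>i\<in>I. a i * T ! i) mod n = 0"
      unfolding has_weighted_zs_subseq_def weighted_zero_sum_def lenT by metis
    have finI: "finite I" using I(1) finite_subset by blast
    define J where "J = {j. j < l2 \<and> j + l1 \<in> I}"
    have I2: "I - {..<l1} = (\<lambda>j. j + l1) ` J"
    proof
      show "I - {..<l1} \<subseteq> (\<lambda>j. j + l1) ` J"
      proof
        fix i assume i: "i \<in> I - {..<l1}"
        then have "i - l1 \<in> J" "i = i - l1 + l1" using I(1) unfolding J_def by auto
        then show "i \<in> (\<lambda>j. j + l1) ` J" by blast
      qed
    qed (force simp: J_def)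
    have s_split: "(\<Sum>i\<in>I. a i * T ! i) = (\<Sum>i\<in>I \<inter> {..<l1}. a i * T ! i) + (\<Sum>i\<in>I - {..<l1}. a i * T ! i)"
      using finI by (rule sum.Int_Diff)
    have s1: "(\<Sum>i\<in>I \<inter> {..<l1}. a i * T ! i) = m2 * (\<Sum>i\<in>I \<inter> {..<l1}. a i * S1 ! i)"
      unfolding sum_distrib_left using I(1) by (intro sum.cong) (auto simp: Tnth)
    have s2: "(\<Sum>i\<in>I - {..<l1}. a i * T ! i) = (\<Sum>j\<in>J. a (j + l1) * S2 ! j)"
      unfolding I2 by (subst sum.reindex) (auto simp: inj_on_def J_def Tnth)
    have "m2 dvd (\<Sum>i\<in>I. a i * T ! i)" using s0 assms(1) by (metis dvd_mult_right mod_eq_0_iff_dvd)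
    moreover have "m2 dvd (\<Sum>i\<in>I \<inter> {..<l1}. a i * T ! i)" unfolding s1 by (rule dvd_triv_left)
    ultimately have "m2 dvd (\<Sum>i\<in>I - {..<l1}. a i * T ! i)"
      unfolding s_split using dvd_add_right_iff by blast
    then have "m2 dvd (\<Sum>j\<in>J. a (j + l1) * S2 ! j)" unfolding s2 .
    then have z2: "(\<Sum>j\<in>J. a (j + l1) * S2 ! j) mod m2 = 0" by simp
    have "(\<Sum>j\<in>J. (a (j + l1) mod m2) * S2 ! j) mod m2
        = (\<Sum>j\<in>J. ((a (j + l1) mod m2) * S2 ! j) mod m2) mod m2" by (rule mod_sum_eq[symmetric])
    also have "\<dots> = (\<Sum>j\<in>J. (a (j + l1) * S2 ! j) mod m2) mod m2" by (simp add: mod_mult_left_eq)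
    also have "\<dots> = 0" using z2 by (simp add: mod_sum_eq)
    finally have "weighted_zero_sum m2 A2 S2 J"
      unfolding weighted_zero_sum_def using I(3) assms(11)
      by (intro exI[of _ "\<lambda>j. a (j + l1) mod m2"]) (auto simp: J_def)
    moreover have "J \<subseteq> {..<length S2}" unfolding J_def l2_def by auto
    ultimately have "J = {}" using S2(3) unfolding has_weighted_zs_subseq_def by blast
    then have II: "I \<inter> {..<l1} = I" using I2 by auto
    have "(\<Sum>i\<in>I - {..<l1}. a i * T ! i) = 0" unfolding s2 \<open>J = {}\<close> by simp
    then have "(\<Sum>i\<in>I. a i * T ! i) = m2 * (\<Sum>i\<in>I. a i * S1 ! i)"
      using s_split s1 II by simp
    then have "m2 * m1 dvd m2 * (\<Sum>i\<in>I. a i * S1 ! i)"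
      using s0 assms(1) by (metis mod_eq_0_iff_dvd mult.commute)
    then have "m1 dvd (\<Sum>i\<in>I. a i * S1 ! i)" using assms(3)
      unfolding nat_mult_dvd_cancel_disj by simp
    then have z1: "(\<Sum>i\<in>I. a i * S1 ! i) mod m1 = 0" by simp
    have "(\<Sum>i\<in>I. (a i mod m1) * S1 ! i) mod m1
        = (\<Sum>i\<in>I. ((a i mod m1) * S1 ! i) mod m1) mod m1" by (rule mod_sum_eq[symmetric])
    also have "\<dots> = (\<Sum>i\<in>I. (a i * S1 ! i) mod m1) mod m1" by (simp add: mod_mult_left_eq)
    also have "\<dots> = 0" using z1 by (simp add: mod_sum_eq)
    finally have "weighted_zero_sum m1 A1 S1 I"
      unfolding weighted_zero_sum_def using I(3) assms(10)
      by (intro exI[of _ "\<lambda>i. a i mod m1"]) auto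
    moreover have "I \<subseteq> {..<length S1}" using II unfolding l1_def by auto
    ultimately show False using S1(3) I(2) unfolding has_weighted_zs_subseq_def by blast
  qed
  have "length T < davenport_A n A"
    using lower_bound[OF _ assms(5) noT setT] assms(1,2,3) by simp
  then show ?thesis using lenT S1(1) S2(1) unfolding l1_def l2_def by linarith
qed

end
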